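(* Let $C\in(\frac{\beta u_0-1}{r},\frac{\beta u_0}{r})$ with $C<\xi_1(\beta)$. Then there exists a unique $z_f^C\in(0,d)$ such that the function $f_C=F_{z_f^C}\mathbf 1_{[0,z_f^C]}+G_{C,z_f^C}\mathbf 1_{(z_f^C,d]}$ solves Problem 1 with $f_C'(0)=0$ and $f_C(d)=C$. Moreover, the map $C\mapsto z_f^C$ is increasing and $z_f^{\xi_1(\beta)}=d$, where for $C=\xi_1(\beta)$ the quantity $z_f^C$ denotes the point $s\in(0,d]$ with $F_s(s)=G_{C,s}(s)$.
   Context: Fix $\mu\in\mathbb R$, $\sigma>0$, $u_0>0$, $r>0$, $\beta>0$, $d>0$. For $u\in[0,u_0]$ let $\theta_1(u)=\frac{\sqrt{(\mu-u)^2+2r\sigma^2}+(\mu-u)}{\sigma^2}$, $\theta_2(u)=\frac{\sqrt{(\mu-u)^2+2r\sigma^2}-(\mu-u)}{\sigma^2}$; write $\alpha_i=\theta_i(u_0)$, $\gamma_i=\theta_i(0)$ ($i=1,2$). Let $\xi_1(\beta)=\frac{\beta u_0}{r}-\beta\frac{e^{\alpha_1d}+\frac{\alpha_1}{\alpha_2}e^{-\alpha_2d}}{\alpha_1(e^{\alpha_1d}-e^{-\alpha_2d})}$. For $s\in(0,d]$ and real $C$ define on $[0,d]$ $$F_s(z)=\frac{\beta u_0}{r}-\beta\frac{e^{\alpha_1z}+\frac{\alpha_1}{\alpha_2}e^{-\alpha_2z}}{\alpha_1(e^{\alpha_1s}-e^{-\alpha_2s})},$$ $$G_{C,s}(z)=\frac{C\gamma_2e^{-\gamma_2(s-d)}-\beta}{\gamma_1e^{\gamma_1s}+\gamma_2e^{(\gamma_1+\gamma_2)d}e^{-\gamma_2s}}\big(e^{\gamma_1z}-e^{(\gamma_1+\gamma_2)d}e^{-\gamma_2z}\big)+Ce^{-\gamma_2(z-d)}.$$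 Problem 1: a bounded twice continuously differentiable function $f$ on $[0,d]$ satisfying $-rf(z)-\mu f'(z)+\frac{\sigma^2}{2}f''(z)+\sup_{u\in[0,u_0]}\{(\beta+f'(z))u\}=0$ for $z\in[0,d]$ (one-sided derivatives at endpoints). *)

theory Defs
  imports "HOL-Analysis.Analysis"
begin

definition theta1 :: "real \<Rightarrow> real \<Rightarrow> real \<Rightarrow> real \<Rightarrow> real" where
  "theta1 mu sg r u = (sqrt ((mu - u)^2 + 2 * r * sg^2) + (mu - u)) / sg^2"

definition theta2 :: "real \<Rightarrow> real \<Rightarrow> real \<Rightarrow> real \<Rightarrow> real" where
  "theta2 mu sg r u = (sqrt ((mu - u)^2 + 2 * r * sg^2) - (mu - u)) / sg^2"

definition xi1 :: "real \<Rightarrow> real \<Rightarrow> real \<Rightarrow> real \<Rightarrow> real \<Rightarrow> real \<Rightarrow> real" where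
  "xi1 mu sg u0 r beta d =
     (let a1 = theta1 mu sg r u0; a2 = theta2 mu sg r u0 in
      beta * u0 / r - beta * (exp (a1 * d) + a1 / a2 * exp (- a2 * d))
                         / (a1 * (exp (a1 * d) - exp (- a2 * d))))"

definition Ffun :: "real \<Rightarrow> real \<Rightarrow> real \<Rightarrow> real \<Rightarrow> real \<Rightarrow> real \<Rightarrow> real \<Rightarrow> real" where
  "Ffun mu sg u0 r beta s z =
     (let a1 = theta1 mu sg r u0; a2 = theta2 mu sg r u0 in
      beta * u0 / r - beta * (exp (a1 * z) + a1 / a2 * exp (- a2 * z))
                         / (a1 * (exp (a1 * s) - exp (- a2 * s))))"

definition Gfun :: "real \<Rightarrow> real \<Rightarrow> real \<Rightarrow> real \<Rightarrow> real \<Rightarrow> real \<Rightarrow> real \<Rightarrow> real \<Rightarrow> real" where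
  "Gfun mu sg r beta d C s z =
     (let g1 = theta1 mu sg r 0; g2 = theta2 mu sg r 0 in
      (C * g2 * exp (- g2 * (s - d)) - beta)
        / (g1 * exp (g1 * s) + g2 * exp ((g1 + g2) * d) * exp (- g2 * s))
        * (exp (g1 * z) - exp ((g1 + g2) * d) * exp (- g2 * z))
      + C * exp (- g2 * (z - d)))"

definition fC :: "real \<Rightarrow> real \<Rightarrow> real \<Rightarrow> real \<Rightarrow> real \<Rightarrow> real \<Rightarrow> real \<Rightarrow> real \<Rightarrow> real \<Rightarrow> real" where
  "fC mu sg u0 r beta d C s z =
     (if z \<le> s then Ffun mu sg u0 r beta s z else Gfun mu sg r beta d C s z)"

definition problem1_sol ::
  "real \<Rightarrow> real \<Rightarrow> real \<Rightarrow> real \<Rightarrow> real \<Rightarrow> real \<Rightarrow> (real \<Rightarrow> real) \<Rightarrow> (real \<Rightarrow> real) \<Rightarrow> (real \<Rightarrow> real) \<Rightarrow> bool"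
  where
  "problem1_sol mu sg u0 r beta d f f' f'' \<longleftrightarrow>
     bounded (f ` {0..d}) \<and>
     (\<forall>z\<in>{0..d}. (f has_real_derivative f' z) (at z within {0..d})) \<and>
     (\<forall>z\<in>{0..d}. (f' has_real_derivative f'' z) (at z within {0..d})) \<and>
     continuous_on {0..d} f'' \<and>
     (\<forall>z\<in>{0..d}. - r * f z - mu * f' z + sg^2 / 2 * f'' z
                  + Sup ((\<lambda>u. (beta + f' z) * u) ` {0..u0}) = 0)"

end

theory Submission
  imports Defs
begin


lemma theta_facts:
  fixes mu sg r u :: real
  assumes sg: "sg > 0" and r: "r > 0"
  shows "theta1 mu sg r u > 0" "theta2 mu sg r u > 0"
    "theta1 mu sg r u * theta2 mu sg r u = 2 * r / sg^2"
    "theta1 mu sg r u - theta2 mu sg r u = 2 * (mu - u) / sg^2"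
    "u - mu < sg^2 * theta2 mu sg r u / 2"
    "mu - u < sg^2 * theta1 mu sg r u / 2"
proof -
  define m where "m = mu - u"
  define q where "q = sqrt (m^2 + 2 * r * sg^2)"
  have pos: "2 * r * sg^2 > 0" using sg r by simp
  have qq: "q^2 = m^2 + 2 * r * sg^2" unfolding q_def using pos
    by (simp add: add_nonneg_nonneg)
  have "\<bar>m\<bar> = sqrt (m^2)" by simp
  also have "\<dots> < q" unfolding q_def using pos by (intro real_sqrt_less_mono) simp
  finally have qm: "\<bar>m\<bar> < q" .
  have t1: "theta1 mu sg r u = (q + m) / sg^2" unfolding theta1_def q_def m_def by simp
  have t2: "theta2 mu sg r u = (q - m) / sg^2" unfolding theta2_def q_def m_def by simp
  show "theta1 mu sg r u > 0" unfolding t1 using qm sg by (auto simp: abs_less_iff)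
  show "theta2 mu sg r u > 0" unfolding t2 using qm sg by (auto simp: abs_less_iff)
  show "theta1 mu sg r u * theta2 mu sg r u = 2 * r / sg^2"
    unfolding t1 t2 using sg qq by (simp add: field_simps power2_eq_square)
  show "theta1 mu sg r u - theta2 mu sg r u = 2 * (mu - u) / sg^2"
    unfolding t1 t2 m_def using sg by (simp add: field_simps)
  show "u - mu < sg^2 * theta2 mu sg r u / 2"
    unfolding t2 using sg qm by (simp add: m_def abs_less_iff)
  show "mu - u < sg^2 * theta1 mu sg r u / 2"
    unfolding t1 using sg qm by (simp add: m_def abs_less_iff)
qed



lemma ode_F_aux:
  fixes rr s2 x y m b A B :: real
  assumes "rr = s2 * x * y / 2" "m = s2 * (x - y) / 2" "y \<noteq> 0"
  shows "- b * x * (x * A + y * B) * (s2/2) = - rr * b * (A + x / y * B) - m * b * x * (A - B)"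
  unfolding assms(1) assms(2) using assms(3) by (simp add: field_simps power2_eq_square)

lemma ode_G_aux:
  fixes rr s2 x y m :: real
  assumes "rr = s2 * x * y / 2" "m = s2 * (x - y) / 2"
  shows "s2/2 * x^2 - rr - m * x = 0" "s2/2 * y^2 - rr + m * y = 0"
  unfolding assms(1) assms(2) by (simp_all add: field_simps power2_eq_square)

locale prm =
  fixes mu sg u0 r beta d :: real
  assumes sg_pos: "sg > 0" and u0_pos: "u0 > 0" and r_pos: "r > 0"
    and b_pos: "beta > 0" and d_pos: "d > 0"
begin

definition "a1 = theta1 mu sg r u0"
definition "a2 = theta2 mu sg r u0"
definition "g1 = theta1 mu sg r 0"
definition "g2 = theta2 mu sg r 0"

lemma a1_pos: "a1 > 0" and a2_pos: "a2 > 0" and g1_pos: "g1 > 0" and g2_pos: "g2 > 0"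
  using theta_facts[OF sg_pos r_pos] unfolding a1_def a2_def g1_def g2_def by auto

lemma r_a: "r = sg^2 * a1 * a2 / 2"
  using theta_facts(3)[OF sg_pos r_pos, of mu u0] sg_pos unfolding a1_def a2_def by (simp add: field_simps)
lemma r_g: "r = sg^2 * g1 * g2 / 2"
  using theta_facts(3)[OF sg_pos r_pos, of mu 0] sg_pos unfolding g1_def g2_def by (simp add: field_simps)
lemma mu_a: "mu - u0 = sg^2 * (a1 - a2) / 2"
  using theta_facts(4)[OF sg_pos r_pos, of mu u0] sg_pos unfolding a1_def a2_def by (simp add: field_simps)
lemma mu_g: "mu = sg^2 * (g1 - g2) / 2"
  using theta_facts(4)[OF sg_pos r_pos, of mu 0] sg_pos unfolding g1_def g2_def by (simp add: field_simps)
lemma ineq_a: "u0 - mu < sg^2 * a2 / 2"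
  using theta_facts(5)[OF sg_pos r_pos, of u0 mu] unfolding a2_def by simp
lemma ineq_g: "mu < sg^2 * g1 / 2"
  using theta_facts(6)[OF sg_pos r_pos, of mu 0] unfolding g1_def by simp

definition "DF s = a1 * (exp (a1 * s) - exp (- a2 * s))"
definition "F1 s z = - beta * a1 * (exp (a1 * z) - exp (- a2 * z)) / DF s"
definition "F2 s z = - beta * a1 * (a1 * exp (a1 * z) + a2 * exp (- a2 * z)) / DF s"
definition "KK C s = (C * g2 * exp (- g2 * (s - d)) - beta)
        / (g1 * exp (g1 * s) + g2 * exp ((g1 + g2) * d) * exp (- g2 * s))"
definition "G1 C s z = KK C s * (g1 * exp (g1 * z) + g2 * exp ((g1 + g2) * d) * exp (- g2 * z))
        - C * g2 * exp (- g2 * (z - d))"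
definition "G2 C s z = KK C s * (g1^2 * exp (g1 * z) - g2^2 * exp ((g1 + g2) * d) * exp (- g2 * z))
        + C * g2^2 * exp (- g2 * (z - d))"

lemma F_eq: "Ffun mu sg u0 r beta s z
   = beta * u0 / r - beta * (exp (a1 * z) + a1 / a2 * exp (- a2 * z)) / DF s"
  unfolding Ffun_def DF_def Let_def a1_def a2_def by simp

lemma G_eq: "Gfun mu sg r beta d C s z
   = KK C s * (exp (g1 * z) - exp ((g1 + g2) * d) * exp (- g2 * z)) + C * exp (- g2 * (z - d))"
  unfolding Gfun_def KK_def Let_def g1_def g2_def by simp

lemma DF_pos: "s > 0 \<Longrightarrow> DF s > 0"
proof -
  assume s: "s > 0"
  have "a1 * s > 0" "a2 * s > 0" using s a1_pos a2_pos by simp_all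
  then have "- a2 * s < a1 * s" by linarith
  then show ?thesis unfolding DF_def using a1_pos by simp
qed

lemma KK_den_pos: "g1 * exp (g1 * s) + g2 * exp ((g1 + g2) * d) * exp (- g2 * s) > 0"
  using g1_pos g2_pos by (intro add_pos_pos) auto

lemma F_deriv: "s > 0 \<Longrightarrow> ((\<lambda>z. Ffun mu sg u0 r beta s z) has_real_derivative F1 s z) (at z)"
  unfolding F_eq F1_def using DF_pos[of s] a2_pos
  by (auto intro!: derivative_eq_intros simp: field_simps)

lemma F1_deriv: "s > 0 \<Longrightarrow> ((\<lambda>z. F1 s z) has_real_derivative F2 s z) (at z)"
  unfolding F1_def F2_def using DF_pos[of s]
  by (auto intro!: derivative_eq_intros simp: field_simps)

lemma G_deriv: "((\<lambda>z. Gfun mu sg r beta d C s z) has_real_derivative G1 C s z) (at z)"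
proof -
  have "((\<lambda>z. KK C s * (exp (g1 * z) - exp ((g1 + g2) * d) * exp (- g2 * z)) + C * exp (- g2 * (z - d)))
    has_real_derivative KK C s * (exp (g1 * z) * g1 - exp ((g1 + g2) * d) * (exp (- g2 * z) * (- g2)))
       + C * (exp (- g2 * (z - d)) * (- g2))) (at z)"
    by (intro derivative_intros DERIV_cmult DERIV_diff DERIV_add DERIV_fun_exp) (auto intro!: derivative_eq_intros)
  then show ?thesis unfolding G_eq G1_def by (rule DERIV_cong) (simp add: algebra_simps)
qed

lemma G1_deriv: "((\<lambda>z. G1 C s z) has_real_derivative G2 C s z) (at z)"
proof -
  have "((\<lambda>z. KK C s * (g1 * exp (g1 * z) + g2 * exp ((g1 + g2) * d) * exp (- g2 * z)) - C * g2 * exp (- g2 * (z - d)))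
    has_real_derivative KK C s * (g1 * (exp (g1 * z) * g1) + g2 * exp ((g1 + g2) * d) * (exp (- g2 * z) * (- g2)))
       - C * g2 * (exp (- g2 * (z - d)) * (- g2))) (at z)"
    by (intro derivative_intros DERIV_cmult DERIV_diff DERIV_add DERIV_fun_exp) (auto intro!: derivative_eq_intros)
  then show ?thesis unfolding G1_def[abs_def] G2_def by (rule DERIV_cong) (simp add: algebra_simps power2_eq_square)
qed

lemma F1_s: "s > 0 \<Longrightarrow> F1 s s = - beta"
  using DF_pos[of s] a1_pos unfolding F1_def DF_def by (simp add: field_simps)

lemma G1_s: "G1 C s s = - beta"
  using KK_den_pos[of s] unfolding G1_def KK_def by (simp add: field_simps)

lemma F1_0: "F1 s 0 = 0" unfolding F1_def by simp

lemma F_ode: assumes s: "s > 0"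
  shows "sg^2 / 2 * F2 s z = r * Ffun mu sg u0 r beta s z + (mu - u0) * F1 s z - beta * u0"
proof -
  have h1: "sg^2 / 2 * F2 s z = - beta * a1 * (a1 * exp (a1 * z) + a2 * exp (- a2 * z)) * (sg^2/2) / DF s"
    unfolding F2_def by simp
  have h2: "r * Ffun mu sg u0 r beta s z + (mu - u0) * F1 s z - beta * u0
     = (- r * beta * (exp (a1 * z) + a1 / a2 * exp (- a2 * z))
        - (mu - u0) * beta * a1 * (exp (a1 * z) - exp (- a2 * z))) / DF s"
    unfolding F_eq F1_def using r_pos DF_pos[OF s] a2_pos by (simp add: field_simps)
  have h3: "- beta * a1 * (a1 * exp (a1 * z) + a2 * exp (- a2 * z)) * (sg^2/2) =
      (- r * beta * (exp (a1 * z) + a1 / a2 * exp (- a2 * z))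
        - (mu - u0) * beta * a1 * (exp (a1 * z) - exp (- a2 * z)))"
    by (rule ode_F_aux[OF r_a mu_a]) (use a2_pos in simp)
  show ?thesis unfolding h1 h2 h3 ..
qed

lemma ode_aux: "sg2 * (K * (h1^2 * A - h2^2 * E * B) + C * h2^2 * W) -
   (rr * (K * (A - E * B) + C * W) + m * (K * (h1 * A + h2 * E * B) - C * h2 * W)) =
   K * A * (sg2 * h1^2 - rr - m * h1) - K * E * B * (sg2 * h2^2 - rr + m * h2)
   + C * W * (sg2 * h2^2 - rr + m * h2)"
  for sg2 K h1 h2 A E B C W rr m :: real
  by (simp add: algebra_simps)

lemma G_ode: "sg^2 / 2 * G2 C s z = r * Gfun mu sg r beta d C s z + mu * G1 C s z"
proof -
  have mu': "mu = sg^2 * (g1 - g2) / 2" by (rule mu_g)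
  note e1 = ode_G_aux(1)[OF r_g mu'] and e2 = ode_G_aux(2)[OF r_g mu']
  show ?thesis
    using ode_aux[of "sg^2/2" "KK C s" g1 "exp (g1 * z)" g2 "exp ((g1 + g2) * d)" "exp (- g2 * z)"
        C "exp (- g2 * (z - d))" r mu]
    unfolding G_eq G1_def G2_def e1 e2 by simp
qed

end



context prm begin

lemma exp_neg: "exp (- x * y) = 1 / exp (x * y)" for x y :: real
  by (simp add: exp_minus')

lemma pf_aux:
  fixes x y p q :: real
  assumes "x * y > 1" "p > 0" "q > 0" "y > 0"
  shows "(x + p / q * (1 / y)) / (p * (x - 1 / y)) = 1 / p + (1 + p / q) / (p * (x * y - 1))"
proof -
  have "x * y - 1 \<noteq> 0" using assms by simp
  moreover have "x - 1 / y = (x * y - 1) / y" using assms by (simp add: field_simps)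
  ultimately show ?thesis using assms by (simp add: field_simps)
qed

lemma pp_formula: assumes s: "s > 0"
  shows "Ffun mu sg u0 r beta s s
     = beta * u0 / r - beta / a1 - beta * (1 + a1 / a2) / (a1 * (exp ((a1 + a2) * s) - 1))"
proof -
  have E: "exp ((a1 + a2) * s) = exp (a1 * s) * exp (a2 * s)"
    by (simp add: distrib_right exp_add)
  have "(a1 + a2) * s > 0" using s a1_pos a2_pos by simp
  then have gt: "exp (a1 * s) * exp (a2 * s) > 1" unfolding E[symmetric] by simp
  have "Ffun mu sg u0 r beta s s = beta * u0 / r - beta * ((exp (a1 * s) + a1 / a2 * (1 / exp (a2 * s)))
     / (a1 * (exp (a1 * s) - 1 / exp (a2 * s))))"
    unfolding F_eq DF_def exp_neg by simp
  also have "\<dots> = beta * u0 / r - beta * (1 / a1 + (1 + a1 / a2) / (a1 * (exp (a1 * s) * exp (a2 * s) - 1)))"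
    using pf_aux[OF gt a1_pos a2_pos] by simp
  finally show ?thesis unfolding E by (simp add: algebra_simps)
qed

definition "pp s = Ffun mu sg u0 r beta s s"
definition "MM t = g1 * exp (- g2 * t) + g2 * exp (g1 * t)"
definition "Phi s = (pp s - beta / g2) * MM (d - s) / (g1 + g2) + beta / g2 * exp (- g2 * (d - s))"

lemma pp_mono: assumes "0 < s1" "s1 < s2" shows "pp s1 < pp s2"
proof -
  have L: "a1 + a2 > 0" using a1_pos a2_pos by simp
  have "exp ((a1 + a2) * s1) < exp ((a1 + a2) * s2)" using assms L by simp
  moreover have "exp ((a1 + a2) * s1) > 1" using assms L by simp
  ultimately have "a1 * (exp ((a1 + a2) * s1) - 1) < a1 * (exp ((a1 + a2) * s2) - 1)"
     "a1 * (exp ((a1 + a2) * s1) - 1) > 0" using a1_pos by simp_all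
  moreover have "beta * (1 + a1 / a2) > 0" using b_pos a1_pos a2_pos by (simp add: add_pos_pos)
  ultimately have "beta * (1 + a1 / a2) / (a1 * (exp ((a1 + a2) * s2) - 1))
      < beta * (1 + a1 / a2) / (a1 * (exp ((a1 + a2) * s1) - 1))"
    by (intro divide_strict_left_mono) (auto intro: mult_pos_pos)
  then show ?thesis unfolding pp_def pp_formula[OF assms(1)] pp_formula[of s2] using assms
    by (subst pp_formula) auto
qed

lemma pp_bound: assumes s: "s > 0" shows "pp s < beta * mu / r"
proof -
  have L: "a1 + a2 > 0" using a1_pos a2_pos by simp
  have "exp ((a1 + a2) * s) > 1" using s L by simp
  then have pos: "beta * (1 + a1 / a2) / (a1 * (exp ((a1 + a2) * s) - 1)) > 0"
    using b_pos a1_pos a2_pos by (intro divide_pos_pos mult_pos_pos) (auto intro: add_pos_pos)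
  have "r / a1 = sg^2 * a2 / 2" using a1_pos by (subst r_a) simp
  then have "u0 - mu < r / a1" using ineq_a by linarith
  then have "(u0 - mu) / r < 1 / a1" using r_pos a1_pos by (simp add: field_simps)
  then have "beta * ((u0 - mu) / r) < beta * (1 / a1)" by (rule mult_strict_left_mono[OF _ b_pos])
  then have "beta * u0 / r - beta / a1 < beta * mu / r" by (simp add: field_simps diff_divide_distrib)
  then show ?thesis unfolding pp_def pp_formula[OF s] using pos by linarith
qed

lemma mu_r_bound: "beta * mu / r < beta / g2"
proof -
  have "r / g2 = sg^2 * g1 / 2" using g2_pos by (subst r_g) simp
  then have "mu < r / g2" using ineq_g by linarith
  then have "mu / r < 1 / g2" using r_pos g2_pos by (simp add: field_simps)
  then have "beta * (mu / r) < beta * (1 / g2)" by (rule mult_strict_left_mono[OF _ b_pos])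
  then show ?thesis by simp
qed

lemma q_neg: "s > 0 \<Longrightarrow> pp s - beta / g2 < 0"
  using pp_bound[of s] mu_r_bound by simp

lemma MM_ge: assumes t: "t \<ge> 0" shows "MM t \<ge> g1 + g2"
proof -
  have "exp (g1 * t) \<ge> 1 + g1 * t" by (rule exp_ge_add_one_self)
  moreover have "exp (- g2 * t) \<ge> 1 + (- g2 * t)" by (rule exp_ge_add_one_self)
  ultimately have "g1 * exp (- g2 * t) + g2 * exp (g1 * t) \<ge> g1 * (1 - g2 * t) + g2 * (1 + g1 * t)"
    using g1_pos g2_pos by (intro add_mono mult_left_mono) auto
  then show ?thesis unfolding MM_def by (simp add: algebra_simps)
qed

lemma MM_mono: assumes "0 \<le> t1" "t1 \<le> t2" shows "MM t1 \<le> MM t2"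
proof -
  define h where "h = t2 - t1"
  have h: "h \<ge> 0" using assms h_def by simp
  have x1: "exp (g1 * t2) = exp (g1 * t1) * exp (g1 * h)" unfolding h_def
    by (simp add: exp_add[symmetric] algebra_simps)
  have y1: "exp (- g2 * t2) = exp (- g2 * t1) * exp (- g2 * h)" unfolding h_def
    by (simp add: exp_add[symmetric] algebra_simps)
  have e1: "exp (g1 * h) - 1 \<ge> g1 * h" using exp_ge_add_one_self[of "g1 * h"] by linarith
  have e2: "exp (- g2 * h) - 1 \<ge> - g2 * h" using exp_ge_add_one_self[of "- g2 * h"] by linarith
  have ex1: "exp (g1 * t1) \<ge> 1" using assms g1_pos by simp
  have ex2: "exp (- g2 * t1) \<le> 1" using assms g2_pos by simp
  have "MM t2 - MM t1 = g1 * exp (- g2 * t1) * (exp (- g2 * h) - 1) + g2 * exp (g1 * t1) * (exp (g1 * h) - 1)"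
    unfolding MM_def x1 y1 by (simp add: algebra_simps)
  also have "\<dots> \<ge> g1 * exp (- g2 * t1) * (- g2 * h) + g2 * exp (g1 * t1) * (g1 * h)"
    using e1 e2 g1_pos g2_pos by (intro add_mono mult_left_mono) auto
  finally have "MM t2 - MM t1 \<ge> g1 * g2 * h * (exp (g1 * t1) - exp (- g2 * t1))"
    by (simp add: algebra_simps)
  moreover have "g1 * g2 * h * (exp (g1 * t1) - exp (- g2 * t1)) \<ge> 0"
    using g1_pos g2_pos h ex1 ex2 by (intro mult_nonneg_nonneg) auto
  ultimately show ?thesis by simp
qed

lemma Phi_mono: assumes "0 < s1" "s1 < s2" "s2 \<le> d" shows "Phi s1 < Phi s2"
proof -
  define q1 where "q1 = pp s1 - beta / g2"
  define q2 where "q2 = pp s2 - beta / g2"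
  have q1n: "q1 < 0" using q_neg assms unfolding q1_def by simp
  have q12: "q1 < q2" using pp_mono[OF assms(1,2)] unfolding q1_def q2_def by simp
  have M12: "MM (d - s2) \<le> MM (d - s1)" using assms by (intro MM_mono) auto
  have M2: "MM (d - s2) > 0" using MM_ge[of "d - s2"] assms g1_pos g2_pos by simp
  have "q1 * MM (d - s1) \<le> q1 * MM (d - s2)" using q1n M12 by (simp add: mult_left_mono_neg)
  also have "\<dots> < q2 * MM (d - s2)" using q12 M2 by simp
  finally have "q1 * MM (d - s1) / (g1 + g2) < q2 * MM (d - s2) / (g1 + g2)"
    using g1_pos g2_pos by (simp add: divide_strict_right_mono)
  moreover have "beta / g2 * exp (- g2 * (d - s1)) < beta / g2 * exp (- g2 * (d - s2))"
  proof (rule mult_strict_left_mono)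
    have "g2 * (d - s2) < g2 * (d - s1)" using assms g2_pos by simp
    then show "exp (- g2 * (d - s1)) < exp (- g2 * (d - s2))" by simp
  qed (use g2_pos b_pos in simp)
  ultimately show ?thesis unfolding Phi_def q1_def q2_def by simp
qed

lemma Phi_le_pp: assumes "0 < s" "s \<le> d" shows "Phi s \<le> pp s"
proof -
  define q where "q = pp s - beta / g2"
  have qn: "q < 0" using q_neg assms unfolding q_def by simp
  have M: "MM (d - s) / (g1 + g2) \<ge> 1" using MM_ge[of "d - s"] assms g1_pos g2_pos by simp
  have "q * (MM (d - s) / (g1 + g2)) \<le> q * 1" using qn M by (intro mult_left_mono_neg) auto
  moreover have "beta / g2 * exp (- g2 * (d - s)) \<le> beta / g2 * 1"
    using assms g2_pos b_pos by (intro mult_left_mono) auto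
  ultimately show ?thesis unfolding Phi_def q_def by simp
qed

lemma Phi_d: "Phi d = xi1 mu sg u0 r beta d"
proof -
  have "MM 0 = g1 + g2" unfolding MM_def by simp
  moreover have "pp d = xi1 mu sg u0 r beta d"
    unfolding pp_def Ffun_def xi1_def by simp
  ultimately show ?thesis unfolding Phi_def using g1_pos g2_pos by simp
qed

end



lemma K_aux:
  fixes e1 e2 f1 f2 h1 h2 C b D :: real
  assumes "e1 > 0" "e2 > 0" "f1 > 0" "f2 > 0" "h1 > 0" "h2 > 0" and D: "D = h1 * e1 * e2 + h2 * f1 * f2"
  shows "(C * h2 * (f2 / e2) - b) / (h1 * e1 + h2 * (f1 * f2) * (1 / e2))
     = (C * h2 * f2 - b * e2) / D"
proof -
  have D0: "D > 0" unfolding D using assms by (intro add_pos_pos mult_pos_pos) auto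
  have "h1 * e1 + h2 * (f1 * f2) * (1 / e2) = D / e2"
    unfolding D using assms by (simp add: field_simps)
  moreover have "C * h2 * (f2 / e2) - b = (C * h2 * f2 - b * e2) / e2"
    using assms by (simp add: field_simps)
  ultimately show ?thesis using assms D0 by simp
qed

lemma G1d_aux:
  fixes e1 e2 f1 f2 h1 h2 q C b S D :: real
  assumes "e1 > 0" "e2 > 0" "f1 > 0" "f2 > 0" "h1 > 0" "h2 > 0" and S: "S = h1 + h2" and D: "D = h1 * e1 * e2 + h2 * f1 * f2"
    and C: "C = q * (h1 * (e2 / f2) + h2 * (f1 / e1)) / S + b / h2 * (e2 / f2)"
  shows "(C * h2 * f2 - b * e2) / D * (h1 * f1 + h2 * (f1 * f2) * (1 / f2))
          - C * h2 + b
       = h1 * h2 * q * (f1 / e1 - e2 / f2) / S + b * (1 - e2 / f2)"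
proof -
  have D0: "D > 0" unfolding D using assms by (intro add_pos_pos mult_pos_pos) auto
  have S0: "S > 0" unfolding S using assms by simp
  show ?thesis unfolding C
    using assms(1-6) D0 S0 apply (simp add: field_simps)
    unfolding S D by algebra
qed
lemma root_aux:
  fixes e1 e2 f1 f2 h1 h2 p C b S D :: real
  assumes "e1 > 0" "e2 > 0" "f1 > 0" "f2 > 0" "h1 > 0" "h2 > 0" and S: "S = h1 + h2" and D: "D = h1 * e1 * e2 + h2 * f1 * f2"
  shows "(C * h2 * f2 - b * e2) / D * (e1 - (f1 * f2) * (1 / e2))
          + C * (f2 / e2) - p
       = S * e1 * f2 / D
         * (C - ((p - b / h2) * (h1 * (e2 / f2) + h2 * (f1 / e1)) / S + b / h2 * (e2 / f2)))"
proof -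
  have D0: "D > 0" unfolding D using assms by (intro add_pos_pos mult_pos_pos) auto
  have S0: "S > 0" unfolding S using assms by simp
  show ?thesis
    using assms(1-6) D0 S0 apply (simp add: field_simps)
    unfolding S D by algebra
qed

context prm begin

lemma ex_shift: "exp (- g2 * (z - d)) = exp (g2 * d) / exp (g2 * z)"
  by (subst exp_diff[symmetric]) (simp add: algebra_simps)
lemma ex_shift2: "exp (- g2 * (d - s)) = exp (g2 * s) / exp (g2 * d)"
  by (subst exp_diff[symmetric]) (simp add: algebra_simps)
lemma ex_shift3: "exp (g1 * (d - s)) = exp (g1 * d) / exp (g1 * s)"
  by (subst exp_diff[symmetric]) (simp add: algebra_simps)
lemma ex_sum: "exp ((g1 + g2) * d) = exp (g1 * d) * exp (g2 * d)"
  by (simp add: distrib_right exp_add)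

definition "DD s = g1 * exp (g1 * s) * exp (g2 * s) + g2 * exp (g1 * d) * exp (g2 * d)"

lemma DD_pos: "DD s > 0" unfolding DD_def using g1_pos g2_pos by (intro add_pos_pos mult_pos_pos) auto

lemma KK_simp: "KK C s = (C * g2 * exp (g2 * d) - beta * exp (g2 * s)) / DD s"
  unfolding KK_def ex_shift ex_sum exp_neg[of g2 s]
  by (rule K_aux[OF _ _ _ _ g1_pos g2_pos]) (auto simp: DD_def)

lemma root_identity: "Gfun mu sg r beta d C s s - pp s
   = (g1 + g2) * exp (g1 * s) * exp (g2 * d) / DD s * (C - Phi s)"
  unfolding G_eq KK_simp Phi_def MM_def ex_shift ex_shift2 ex_shift3 ex_sum exp_neg[of g2 s]
  by (rule root_aux[OF _ _ _ _ g1_pos g2_pos]) (auto simp: DD_def)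

lemma root_iff: "Ffun mu sg u0 r beta s s = Gfun mu sg r beta d C s s \<longleftrightarrow> Phi s = C"
proof -
  have "(g1 + g2) * exp (g1 * s) * exp (g2 * d) / DD s > 0"
    using g1_pos g2_pos DD_pos[of s] by (intro divide_pos_pos add_pos_pos mult_pos_pos) auto
  then show ?thesis using root_identity[of C s] unfolding pp_def by auto
qed

lemma ratio_aux:
  fixes rr s2 x y m b :: real
  assumes "rr = s2 * x * y / 2" "m = s2 * (x - y) / 2" "x > 0" "y > 0" "s2 > 0"
  shows "x * y * (b * m / rr) = b * (x - y)"
  unfolding assms(1) assms(2) using assms(3-5) by (simp add: field_simps)

lemma G1_d_bound: assumes s: "0 < s" "s \<le> d" and root: "Phi s = C" shows "G1 C s d \<le> - beta"
proof -
  define q where "q = pp s - beta / g2"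
  define X where "X = exp (g1 * (d - s))"
  define Y where "Y = exp (- g2 * (d - s))"
  have e0: "exp (- g2 * (d - d)) = 1" by simp
  have C: "C = q * (g1 * Y + g2 * X) / (g1 + g2) + beta / g2 * Y"
    using root unfolding Phi_def MM_def q_def X_def Y_def by simp
  have C': "C = q * (g1 * (exp (g2 * s) / exp (g2 * d)) + g2 * (exp (g1 * d) / exp (g1 * s))) / (g1 + g2)
      + beta / g2 * (exp (g2 * s) / exp (g2 * d))"
    using C unfolding X_def Y_def ex_shift2 ex_shift3 .
  have G1e: "G1 C s d = (C * g2 * exp (g2 * d) - beta * exp (g2 * s)) / DD s
      * (g1 * exp (g1 * d) + g2 * (exp (g1 * d) * exp (g2 * d)) * (1 / exp (g2 * d))) - C * g2"
    unfolding G1_def KK_simp ex_sum exp_neg[of g2 d] by simp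
  have eq0: "(C * g2 * exp (g2 * d) - beta * exp (g2 * s)) / DD s
      * (g1 * exp (g1 * d) + g2 * (exp (g1 * d) * exp (g2 * d)) * (1 / exp (g2 * d))) - C * g2 + beta
      = g1 * g2 * q * (exp (g1 * d) / exp (g1 * s) - exp (g2 * s) / exp (g2 * d)) / (g1 + g2)
        + beta * (1 - exp (g2 * s) / exp (g2 * d))"
    by (rule G1d_aux[OF _ _ _ _ g1_pos g2_pos refl DD_def C']) auto
  have eq: "G1 C s d + beta = g1 * g2 * q * (X - Y) / (g1 + g2) + beta * (1 - Y)"
    unfolding G1e eq0 X_def Y_def ex_shift2 ex_shift3 ..
  have mu': "mu = sg^2 * (g1 - g2) / 2" by (rule mu_g)
  have gg: "g1 * g2 * (beta * mu / r) = beta * (g1 - g2)"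
    by (rule ratio_aux[OF r_g mu' g1_pos g2_pos]) (use sg_pos in simp)
  have "q < beta * mu / r - beta / g2" using pp_bound[OF s(1)] unfolding q_def by simp
  then have "g1 * g2 * q < g1 * g2 * (beta * mu / r - beta / g2)"
    using g1_pos g2_pos by simp
  also have "\<dots> = g1 * g2 * (beta * mu / r) - g1 * beta" using g2_pos by (simp add: right_diff_distrib)
  also have "\<dots> = - beta * g2" using gg by (simp add: algebra_simps)
  finally have qb: "g1 * g2 * q < - beta * g2" .
  have XY: "X - Y \<ge> 0" unfolding X_def Y_def using s g1_pos g2_pos
    by (smt (verit) exp_ge_zero mult_nonneg_nonneg one_le_exp_iff exp_le_one_iff mult_nonpos_nonneg)
  have "g1 * g2 * q * (X - Y) \<le> - beta * g2 * (X - Y)"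
    using qb XY by (intro mult_right_mono) auto
  then have "g1 * g2 * q * (X - Y) / (g1 + g2) \<le> - beta * g2 * (X - Y) / (g1 + g2)"
    using g1_pos g2_pos by (intro divide_right_mono) auto
  moreover have "- beta * g2 * (X - Y) / (g1 + g2) + beta * (1 - Y) = beta * ((g1 + g2) - (g1 * Y + g2 * X)) / (g1 + g2)"
    using g1_pos g2_pos by (simp add: field_simps)
  moreover have "g1 * Y + g2 * X \<ge> g1 + g2" using MM_ge[of "d - s"] s unfolding MM_def X_def Y_def by simp
  then have "beta * ((g1 + g2) - (g1 * Y + g2 * X)) / (g1 + g2) \<le> 0"
    using b_pos g1_pos g2_pos by (intro divide_nonpos_pos mult_nonneg_nonpos) auto
  ultimately show ?thesis using eq by linarith
qed

lemma F2_neg: "s > 0 \<Longrightarrow> F2 s s < 0"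
  unfolding F2_def using DF_pos[of s] b_pos a1_pos a2_pos
  by (intro divide_neg_pos) (auto intro!: mult_pos_pos add_pos_pos)

lemma G2_s: assumes s: "s > 0" and eq: "Ffun mu sg u0 r beta s s = Gfun mu sg r beta d C s s"
  shows "G2 C s s = F2 s s"
proof -
  have "sg^2 / 2 * G2 C s s = sg^2 / 2 * F2 s s"
    unfolding G_ode F_ode[OF s] G1_s F1_s[OF s] eq by (simp add: algebra_simps)
  then show ?thesis using sg_pos by simp
qed

lemma G2_form: "G2 C s z = exp (- g2 * z) *
   (KK C s * g1^2 * exp ((g1 + g2) * z) - g2^2 * (KK C s * exp ((g1 + g2) * d) - C * exp (g2 * d)))"
proof -
  have h1: "exp (g1 * z) = exp (- g2 * z) * exp ((g1 + g2) * z)"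
    by (simp add: exp_add[symmetric] algebra_simps)
  have h2: "exp (- g2 * (z - d)) = exp (- g2 * z) * exp (g2 * d)"
    by (simp add: exp_add[symmetric] algebra_simps)
  show ?thesis unfolding G2_def h1 h2 by (simp add: algebra_simps)
qed

lemma G1_le: assumes s: "0 < s" "s < d" and root: "Phi s = C" and z: "s < z" "z \<le> d"
  shows "G1 C s z \<le> - beta"
proof (rule ccontr)
  assume "\<not> ?thesis"
  then have gz: "G1 C s z > - beta" by simp
  define R where "R y = KK C s * g1^2 * exp ((g1 + g2) * y) - g2^2 * (KK C s * exp ((g1 + g2) * d) - C * exp (g2 * d))" for y
  have G2R: "G2 C s y = exp (- g2 * y) * R y" for y unfolding R_def by (rule G2_form)
  have sgn: "G2 C s y > 0 \<longleftrightarrow> R y > 0" for y unfolding G2R by (simp add: zero_less_mult_iff)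
  have sgn2: "G2 C s y < 0 \<longleftrightarrow> R y < 0" for y unfolding G2R by (simp add: mult_less_0_iff)
  have "Ffun mu sg u0 r beta s s = Gfun mu sg r beta d C s s" using root_iff root by simp
  then have "G2 C s s < 0" using G2_s[OF s(1)] F2_neg[OF s(1)] by simp
  then have Rs: "R s < 0" using sgn2 by simp
  obtain xi where xi: "s < xi" "xi < z" "G1 C s z - G1 C s s = (z - s) * G2 C s xi"
    using MVT2[OF z(1), of "G1 C s" "G2 C s"] G1_deriv by blast
  have "(z - s) * G2 C s xi > 0" using xi(3) gz G1_s[of C s] by simp
  then have "G2 C s xi > 0" using z by (simp add: zero_less_mult_iff)
  then have Rxi: "R xi > 0" using sgn by simp
  have KKp: "KK C s > 0"
  proof (rule ccontr)
    assume "\<not> KK C s > 0"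
    then have k: "KK C s * g1^2 \<le> 0" by (simp add: mult_nonpos_nonneg)
    have "exp ((g1 + g2) * s) \<le> exp ((g1 + g2) * xi)" using xi g1_pos g2_pos by simp
    then have "KK C s * g1^2 * exp ((g1 + g2) * xi) \<le> KK C s * g1^2 * exp ((g1 + g2) * s)"
      using k by (rule mult_left_mono_neg)
    then have "R xi \<le> R s" unfolding R_def by simp
    with Rxi Rs show False by simp
  qed
  have Rmono: "R y > 0" if "xi \<le> y" for y
  proof -
    have "exp ((g1 + g2) * xi) \<le> exp ((g1 + g2) * y)" using that g1_pos g2_pos by simp
    then have "KK C s * g1^2 * exp ((g1 + g2) * xi) \<le> KK C s * g1^2 * exp ((g1 + g2) * y)"
      using KKp g1_pos by (intro mult_left_mono) auto
    then have "R xi \<le> R y" unfolding R_def by simp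
    with Rxi show ?thesis by simp
  qed
  have gd: "G1 C s d \<le> - beta" using G1_d_bound[of s C] s root by simp
  show False
  proof (cases "z = d")
    case True
    with gz gd show False by simp
  next
    case False
    then have zd: "z < d" using z by simp
    obtain eta where eta: "z < eta" "eta < d" "G1 C s d - G1 C s z = (d - z) * G2 C s eta"
      using MVT2[OF zd, of "G1 C s" "G2 C s"] G1_deriv by blast
    have "G2 C s eta > 0" using Rmono[of eta] sgn xi eta by simp
    then have "(d - z) * G2 C s eta > 0" using zd by simp
    with eta gz gd show False by simp
  qed
qed

lemma F1_ge: assumes "0 < s" "0 \<le> z" "z \<le> s" shows "- beta \<le> F1 s z"
proof -
  have e: "F1 s z = - beta * ((exp (a1 * z) - exp (- a2 * z)) / (exp (a1 * s) - exp (- a2 * s)))"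
    unfolding F1_def DF_def using a1_pos by simp
  have den: "exp (a1 * s) - exp (- a2 * s) > 0" using DF_pos[OF assms(1)] a1_pos unfolding DF_def
    by (simp add: zero_less_mult_iff)
  have i1: "exp (a1 * z) \<le> exp (a1 * s)" using assms a1_pos by simp
  have i2: "exp (- a2 * s) \<le> exp (- a2 * z)" using assms a2_pos by simp
  have "exp (a1 * z) - exp (- a2 * z) \<le> exp (a1 * s) - exp (- a2 * s)" using i1 i2 by linarith
  then have "(exp (a1 * z) - exp (- a2 * z)) / (exp (a1 * s) - exp (- a2 * s)) \<le> 1"
    using den by (simp add: pos_divide_le_eq[OF den])
  then have "beta * ((exp (a1 * z) - exp (- a2 * z)) / (exp (a1 * s) - exp (- a2 * s))) \<le> beta * 1"
    using b_pos by (intro mult_left_mono) auto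
  then show ?thesis unfolding e by simp
qed

end



lemma deriv_Un:
  fixes f :: "real \<Rightarrow> real"
  shows "(f has_field_derivative D) (at x within S) \<Longrightarrow> (f has_field_derivative D) (at x within T)
    \<Longrightarrow> (f has_field_derivative D) (at x within S \<union> T)"
  unfolding has_field_derivative_iff by (simp add: Lim_within_Un)

lemma pw_deriv:
  fixes f g f' g' :: "real \<Rightarrow> real"
  assumes df: "\<And>z. (f has_real_derivative f' z) (at z)"
    and dg: "\<And>z. (g has_real_derivative g' z) (at z)"
    and e0: "f s = g s" and e1: "f' s = g' s"
  shows "((\<lambda>z. if z \<le> s then f z else g z) has_real_derivative (if z \<le> s then f' z else g' z)) (at z)"
proof -
  consider "z < s" | "z > s" | "z = s" by linarith
  then show ?thesis
  proof cases
    case 1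
    have "((\<lambda>z. if z \<le> s then f z else g z) has_real_derivative f' z) (at z)"
      by (rule has_field_derivative_transform_within_open[OF df, of "{..<s}"]) (use 1 in auto)
    then show ?thesis using 1 by simp
  next
    case 2
    have "((\<lambda>z. if z \<le> s then f z else g z) has_real_derivative g' z) (at z)"
      by (rule has_field_derivative_transform_within_open[OF dg, of "{s<..}"]) (use 2 in auto)
    then show ?thesis using 2 by simp
  next
    case 3
    have a: "((\<lambda>z. if z \<le> s then f z else g z) has_real_derivative f' s) (at s within {..s})"
      by (rule has_field_derivative_transform_within[OF has_field_derivative_at_within[OF df] zero_less_one]) auto
    have b: "((\<lambda>z. if z \<le> s then f z else g z) has_real_derivative f' s) (at s within {s..})"
      unfolding e1
      by (rule has_field_derivative_transform_within[OF has_field_derivative_at_within[OF dg] zero_less_one])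
        (auto simp: e0)
    have U: "{..s} \<union> {s..} = (UNIV::real set)" by auto
    have "((\<lambda>z. if z \<le> s then f z else g z) has_real_derivative f' s) (at s)"
      using deriv_Un[OF a b] unfolding U by simp
    then show ?thesis using 3 by simp
  qed
qed

lemma sup_lin:
  fixes k u0 :: real
  assumes "u0 > 0"
  shows "Sup ((\<lambda>u. k * u) ` {0..u0}) = (if k \<ge> 0 then k * u0 else 0)"
proof (cases "k \<ge> 0")
  case True
  have "Sup ((\<lambda>u. k * u) ` {0..u0}) = k * u0"
  proof (rule cSup_eq_maximum)
    show "k * u0 \<in> (\<lambda>u. k * u) ` {0..u0}" using assms by auto
    fix x assume "x \<in> (\<lambda>u. k * u) ` {0..u0}"
    then obtain u where "u \<in> {0..u0}" "x = k * u" by auto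
    then show "x \<le> k * u0" using True by (auto intro: mult_left_mono)
  qed
  then show ?thesis using True by simp
next
  case False
  have "Sup ((\<lambda>u. k * u) ` {0..u0}) = 0"
  proof (rule cSup_eq_maximum)
    show "0 \<in> (\<lambda>u. k * u) ` {0..u0}" using assms by (auto intro!: image_eqI[of _ _ 0])
    fix x assume "x \<in> (\<lambda>u. k * u) ` {0..u0}"
    then obtain u where "u \<in> {0..u0}" "x = k * u" by auto
    then show "x \<le> 0" using False by (auto simp: mult_nonpos_nonneg)
  qed
  then show ?thesis using False by simp
qed

context prm begin

definition "fd C s = (\<lambda>z. if z \<le> s then F1 s z else G1 C s z)"
definition "fdd C s = (\<lambda>z. if z \<le> s then F2 s z else G2 C s z)"

lemma fC_eq: "fC mu sg u0 r beta d C s = (\<lambda>z. if z \<le> s then Ffun mu sg u0 r beta s z else Gfun mu sg r beta d C s z)"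
  by (rule ext) (simp add: fC_def)

lemma F2_cont: "s > 0 \<Longrightarrow> continuous_on A (F2 s)"
  unfolding F2_def using DF_pos[of s] by (intro continuous_intros) auto

lemma G2_cont: "continuous_on A (G2 C s)"
  unfolding G2_def by (intro continuous_intros)

lemma G_end: "Gfun mu sg r beta d C s d = C"
proof -
  have "exp ((g1 + g2) * d) * exp (- g2 * d) = exp (g1 * d)"
    by (simp add: exp_add[symmetric] algebra_simps)
  then show ?thesis unfolding G_eq by simp
qed

lemma sol:
  assumes s: "0 < s" "s < d" and root: "Phi s = C"
  shows "problem1_sol mu sg u0 r beta d (fC mu sg u0 r beta d C s) (fd C s) (fdd C s)
     \<and> fd C s 0 = 0 \<and> fC mu sg u0 r beta d C s d = C"
proof -
  have rt: "Ffun mu sg u0 r beta s s = Gfun mu sg r beta d C s s" using root_iff root by simp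
  have D1: "(fC mu sg u0 r beta d C s has_real_derivative fd C s z) (at z)" for z
    unfolding fC_eq fd_def
    by (rule pw_deriv[OF F_deriv[OF s(1)] G_deriv rt]) (simp add: F1_s[OF s(1)] G1_s)
  have D2: "(fd C s has_real_derivative fdd C s z) (at z)" for z
    unfolding fd_def fdd_def
    by (rule pw_deriv[OF F1_deriv[OF s(1)] G1_deriv]) (simp_all add: F1_s[OF s(1)] G1_s G2_s[OF s(1) rt])
  have cf: "continuous_on {0..d} (fC mu sg u0 r beta d C s)"
    using D1 by (intro continuous_at_imp_continuous_on) (auto intro: DERIV_isCont)
  have bnd: "bounded (fC mu sg u0 r beta d C s ` {0..d})"
    by (rule compact_imp_bounded[OF compact_continuous_image[OF cf compact_Icc]])
  have cdd: "continuous_on {0..d} (fdd C s)"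
    unfolding fdd_def
    by (rule continuous_on_cases_le[where h="\<lambda>x. x"])
      (auto intro: continuous_on_subset[OF F2_cont[OF s(1)]] continuous_on_subset[OF G2_cont]
        continuous_on_id simp: G2_s[OF s(1) rt])
  have hjb: "- r * fC mu sg u0 r beta d C s z - mu * fd C s z + sg^2 / 2 * fdd C s z
       + Sup ((\<lambda>u. (beta + fd C s z) * u) ` {0..u0}) = 0" if z: "z \<in> {0..d}" for z
  proof (cases "z \<le> s")
    case True
    have ge: "beta + F1 s z \<ge> 0" using F1_ge[OF s(1), of z] z True by simp
    have ode: "sg^2 / 2 * F2 s z = r * Ffun mu sg u0 r beta s z + (mu - u0) * F1 s z - beta * u0"
      by (rule F_ode[OF s(1)])
    show ?thesis unfolding fC_eq fd_def fdd_def sup_lin[OF u0_pos] using True ge ode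
      by (simp add: algebra_simps)
  next
    case False
    have le: "beta + G1 C s z \<le> 0" using G1_le[OF s root, of z] z False by simp
    have ode: "sg^2 / 2 * G2 C s z = r * Gfun mu sg r beta d C s z + mu * G1 C s z"
      by (rule G_ode)
    show ?thesis unfolding fC_eq fd_def fdd_def sup_lin[OF u0_pos] using False le ode
      by (simp add: algebra_simps)
  qed
  have p: "problem1_sol mu sg u0 r beta d (fC mu sg u0 r beta d C s) (fd C s) (fdd C s)"
    unfolding problem1_sol_def
  proof (intro conjI ballI)
    fix z :: real
    show "(fC mu sg u0 r beta d C s has_real_derivative fd C s z) (at z within {0..d})"
      by (rule has_field_derivative_at_within[OF D1])
    show "(fd C s has_real_derivative fdd C s z) (at z within {0..d})"
      by (rule has_field_derivative_at_within[OF D2])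
  qed (use bnd cdd hjb in auto)
  have "fd C s 0 = 0" using s by (simp add: fd_def F1_0)
  moreover have "fC mu sg u0 r beta d C s d = C" using s by (simp add: fC_def G_end)
  ultimately show ?thesis using p by simp
qed

lemma good_root:
  assumes s: "0 < s" "s < d"
    and P: "problem1_sol mu sg u0 r beta d (fC mu sg u0 r beta d C s) f' f''"
  shows "Phi s = C"
proof -
  let ?f = "fC mu sg u0 r beta d C s"
  have "(?f has_real_derivative f' s) (at s within {0..d})" using P s unfolding problem1_sol_def by auto
  then have "continuous (at s within {0..d}) ?f" by (rule DERIV_continuous)
  then have "(?f \<longlongrightarrow> ?f s) (at s within {0..d})" by (simp add: continuous_within)
  then have "(?f \<longlongrightarrow> ?f s) (at s within {s..d})" by (rule tendsto_within_subset) (use s in auto)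
  then have l1: "(?f \<longlongrightarrow> ?f s) (at_right s)" using at_within_Icc_at_right[OF s(2)] by simp
  have ev: "eventually (\<lambda>z. ?f z = Gfun mu sg r beta d C s z) (at_right s)"
    using eventually_at_right_real[OF s(2)] by eventually_elim (auto simp: fC_def)
  have l2: "(Gfun mu sg r beta d C s \<longlongrightarrow> ?f s) (at_right s)"
    using tendsto_cong[OF ev] l1 by simp
  have "isCont (Gfun mu sg r beta d C s) s" by (rule DERIV_isCont[OF G_deriv])
  then have l3: "(Gfun mu sg r beta d C s \<longlongrightarrow> Gfun mu sg r beta d C s s) (at_right s)"
    by (simp add: isCont_def filterlim_at_split)
  have "?f s = Gfun mu sg r beta d C s s"
    by (rule tendsto_unique[OF trivial_limit_at_right_real l2 l3])
  then have "Ffun mu sg u0 r beta s s = Gfun mu sg r beta d C s s" by (simp add: fC_def)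
  then show ?thesis using root_iff by simp
qed

end



context prm begin

lemma Phi_cont: assumes x: "x > 0" shows "isCont Phi x"
proof -
  have "DF x \<noteq> 0" using DF_pos[OF x] by simp
  then have nz: "a1 * (exp (a1 * x) - exp (- a2 * x)) \<noteq> 0" unfolding DF_def .
  show ?thesis
    unfolding Phi_def[abs_def] pp_def F_eq DF_def MM_def
    using nz g1_pos g2_pos a2_pos by (intro continuous_intros) auto
qed

lemma small_pp: "\<exists>s0. 0 < s0 \<and> s0 < d \<and> pp s0 < C"
proof -
  define L where "L = a1 + a2"
  define k where "k = 1 + a1 / a2"
  define B where "B = \<bar>u0 / r - 1 / a1 - C / beta\<bar> + 1"
  define e where "e = k / (a1 * B)"
  have L: "L > 0" unfolding L_def using a1_pos a2_pos by simp
  have k: "k > 0" unfolding k_def using a1_pos a2_pos by (simp add: add_pos_pos)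
  have B: "B > 0" unfolding B_def by simp
  have e: "e > 0" unfolding e_def using k B a1_pos by simp
  define s0 where "s0 = min (d / 2) (ln (1 + e) / L)"
  have s0p: "s0 > 0" unfolding s0_def using d_pos e L by simp
  have s0d: "s0 < d" unfolding s0_def using d_pos by simp
  have "L * s0 \<le> ln (1 + e)" unfolding s0_def using L by (simp add: min_def field_simps)
  then have "exp (L * s0) \<le> 1 + e" using e by (metis exp_le_cancel_iff exp_ln add_pos_pos zero_less_one)
  then have x1: "exp (L * s0) - 1 \<le> e" by simp
  have x0: "exp (L * s0) - 1 > 0" using L s0p by simp
  have "k / (a1 * e) \<le> k / (a1 * (exp (L * s0) - 1))"
    using x0 x1 k a1_pos e by (intro divide_left_mono mult_left_mono mult_pos_pos) auto
  moreover have "k / (a1 * e) = B" unfolding e_def using k B a1_pos by (simp add: field_simps)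
  ultimately have kb: "B \<le> k / (a1 * (exp (L * s0) - 1))" by simp
  have "pp s0 = beta * u0 / r - beta / a1 - beta * (k / (a1 * (exp (L * s0) - 1)))"
    unfolding pp_def pp_formula[OF s0p] k_def L_def by (simp add: mult.commute)
  also have "\<dots> \<le> beta * u0 / r - beta / a1 - beta * B"
  proof -
    have "beta * B \<le> beta * (k / (a1 * (exp (L * s0) - 1)))" using kb b_pos by (intro mult_left_mono) auto
    then show ?thesis by linarith
  qed
  also have "\<dots> < C"
  proof -
    have "u0 / r - 1 / a1 - C / beta < B" unfolding B_def by simp
    then have "beta * (u0 / r - 1 / a1 - C / beta) < beta * B" using b_pos by simp
    moreover have "beta * (u0 / r - 1 / a1 - C / beta) = beta * u0 / r - beta / a1 - C"
      using b_pos by (simp add: right_diff_distrib)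
    ultimately show ?thesis by linarith
  qed
  finally show ?thesis using s0p s0d by blast
qed

lemma exists_root: assumes C: "C < xi1 mu sg u0 r beta d" shows "\<exists>s. 0 < s \<and> s < d \<and> Phi s = C"
proof -
  obtain s0 where s0: "0 < s0" "s0 < d" "pp s0 < C" using small_pp by blast
  have P0: "Phi s0 < C" using Phi_le_pp[of s0] s0 by simp
  have Pd: "C < Phi d" using C Phi_d by simp
  obtain x where x: "s0 \<le> x" "x \<le> d" "Phi x = C"
    using IVT[of Phi s0 C d] P0 Pd s0 Phi_cont by force
  have "x \<noteq> s0" using x P0 by auto
  moreover have "x \<noteq> d" using x Pd by auto
  ultimately have "s0 < x" "x < d" using x by auto
  then show ?thesis using x s0 by (intro exI[of _ x]) auto
qed

lemma Phi_inj: "0 < s1 \<Longrightarrow> s1 \<le> d \<Longrightarrow> 0 < s2 \<Longrightarrow> s2 \<le> d \<Longrightarrow> Phi s1 = Phi s2 \<Longrightarrow> s1 = s2"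
  using Phi_mono[of s1 s2] Phi_mono[of s2 s1] by (cases s1 s2 rule: linorder_cases) auto

end

theorem proposition4p5:
  fixes mu sg u0 r beta d :: real
  assumes "sg > 0" and "u0 > 0" and "r > 0" and "beta > 0" and "d > 0"
  defines "adm \<equiv> {C. (beta * u0 - 1) / r < C \<and> C < beta * u0 / r
                       \<and> C < xi1 mu sg u0 r beta d}"
  defines "good \<equiv> (\<lambda>C s. \<exists>f' f''.
             problem1_sol mu sg u0 r beta d (fC mu sg u0 r beta d C s) f' f''
             \<and> f' 0 = 0 \<and> fC mu sg u0 r beta d C s d = C)"
  defines "zf \<equiv> (\<lambda>C. THE s. s \<in> {0<..<d} \<and> good C s)"
  shows "(\<forall>C\<in>adm. \<exists>!s. s \<in> {0<..<d} \<and> good C s)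
         \<and> (\<forall>C1\<in>adm. \<forall>C2\<in>adm. C1 < C2 \<longrightarrow> zf C1 < zf C2)
         \<and> (\<forall>s\<in>{0<..d}.
              Ffun mu sg u0 r beta s s
                = Gfun mu sg r beta d (xi1 mu sg u0 r beta d) s s
              \<longleftrightarrow> s = d)"
proof -
  interpret prm mu sg u0 r beta d using assms(1-5) by unfold_locales
  have key: "good C s \<longleftrightarrow> Phi s = C" if s: "s \<in> {0<..<d}" for C s
  proof
    assume "good C s"
    then obtain f' f'' where "problem1_sol mu sg u0 r beta d (fC mu sg u0 r beta d C s) f' f''"
      unfolding good_def by blast
    then show "Phi s = C" using good_root s by auto
  next
    assume "Phi s = C"
    then show "good C s" unfolding good_def using sol[of s C] s by auto
  qed
  have EU: "\<exists>!s. s \<in> {0<..<d} \<and> good C s" if C: "C \<in> adm" for C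
  proof -
    obtain s where s: "0 < s" "s < d" "Phi s = C" using exists_root[of C] C unfolding adm_def by auto
    show ?thesis
    proof (rule ex1I[of _ s])
      show "s \<in> {0<..<d} \<and> good C s" using s key by auto
      fix t assume "t \<in> {0<..<d} \<and> good C t"
      then have "t \<in> {0<..<d}" "Phi t = C" using key by auto
      then show "t = s" using Phi_inj[of t s] s by auto
    qed
  qed
  have zf: "zf C \<in> {0<..<d} \<and> Phi (zf C) = C" if C: "C \<in> adm" for C
  proof -
    have "zf C \<in> {0<..<d} \<and> good C (zf C)" unfolding zf_def by (rule theI'[OF EU[OF C]])
    then show ?thesis using key by auto
  qed
  have mono: "zf C1 < zf C2" if "C1 \<in> adm" "C2 \<in> adm" "C1 < C2" for C1 C2
  proof (rule ccontr)
    assume "\<not> zf C1 < zf C2"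
    then have le: "zf C2 \<le> zf C1" by simp
    have z1: "zf C1 \<in> {0<..<d}" "Phi (zf C1) = C1" using zf[OF that(1)] by auto
    have z2: "zf C2 \<in> {0<..<d}" "Phi (zf C2) = C2" using zf[OF that(2)] by auto
    show False
    proof (cases "zf C2 = zf C1")
      case True then show False using z1 z2 that(3) by simp
    next
      case False
      then have "zf C2 < zf C1" using le by simp
      then have "Phi (zf C2) < Phi (zf C1)" using z1 z2 by (intro Phi_mono) auto
      then show False using z1 z2 that(3) by simp
    qed
  qed
  have third: "Ffun mu sg u0 r beta s s = Gfun mu sg r beta d (xi1 mu sg u0 r beta d) s s \<longleftrightarrow> s = d"
    if s: "s \<in> {0<..d}" for s
  proof -
    have "Ffun mu sg u0 r beta s s = Gfun mu sg r beta d (xi1 mu sg u0 r beta d) s s \<longleftrightarrow> Phi s = Phi d"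
      using root_iff Phi_d by simp
    also have "\<dots> \<longleftrightarrow> s = d" using Phi_inj[of s d] s d_pos by auto
    finally show ?thesis .
  qed
  show ?thesis using EU mono third by blast
qed


end
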